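(* Let $p\ge1$ and $s_1,\dots,s_p\in\mathbb{C}^\times$ with $|s_i|\le1$ for all $i$. Then the Newton series $\sum_{n\ge0}(-1)^n\mathtt{s}^{\mathrm{sh}}_{y_{s_1}\cdots y_{s_p}}(n)\binom{z}{n}$ converges absolutely for $\mathrm{Re}(z)>-1$. If moreover $s_1\ne1$, it converges for $\mathrm{Re}(z)>-2$.
   Context: $\mathtt{s}^{\mathrm{sh}}_{y_{s_1}\cdots y_{s_p}}(m)=\sum_{m=m_1\ge\cdots\ge m_p\ge0}\frac{s_1^{m_1-m_2}\cdots s_{p-1}^{m_{p-1}-m_p}s_p^{m_p+1}}{(m_1+1)\cdots(m_p+1)}$ for $m\in\mathbb{Z}_{\ge0}$; $\binom{z}{n}=\frac{z(z-1)\cdots(z-n+1)}{n!}$. *)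

theory Defs
  imports Complex_Main
begin

text \<open>Admissible index tuples: m = m_1 >= m_2 >= ... >= m_p >= 0, encoded as
  functions on nat with indices 0..p-1 (zero outside).\<close>
definition sh_indices :: "nat \<Rightarrow> nat \<Rightarrow> (nat \<Rightarrow> nat) set" where
  "sh_indices p m = {f. f 0 = m \<and> (\<forall>i. Suc i < p \<longrightarrow> f (Suc i) \<le> f i) \<and> (\<forall>i\<ge>p. f i = 0)}"

text \<open>s^sh_{y_{s_1}...y_{s_p}}(m), with s_i written s (i-1).\<close>
definition ssh :: "nat \<Rightarrow> (nat \<Rightarrow> complex) \<Rightarrow> nat \<Rightarrow> complex" where
  "ssh p s m = (\<Sum>f\<in>sh_indices p m.
      (\<Prod>i<p - 1. s i ^ (f i - f (Suc i))) * s (p - 1) ^ (f (p - 1) + 1)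
      / (\<Prod>i<p. of_nat (f i + 1)))"

end

theory Submission
  imports Defs "HOL-Analysis.Analysis"
begin


lemma sh_le: assumes "f \<in> sh_indices p n" shows "f i \<le> n"
proof (induction i)
  case 0 then show ?case using assms by (simp add: sh_indices_def)
next
  case (Suc i)
  have f: "\<forall>i. Suc i < p \<longrightarrow> f (Suc i) \<le> f i" "\<forall>i\<ge>p. f i = 0" using assms by (auto simp: sh_indices_def)
  show ?case
  proof (cases "Suc i < p")
    case True then show ?thesis using f(1) Suc by (meson le_trans)
  next
    case False then show ?thesis using f(2) by simp
  qed
qed

lemma finite_sh: "finite (sh_indices p n)"
proof -
  have "sh_indices p n \<subseteq> {f. \<forall>x. (x \<in> {..<p} \<longrightarrow> f x \<in> {..n}) \<and> (x \<notin> {..<p} \<longrightarrow> f x = 0)}"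
    using sh_le by (auto simp: sh_indices_def)
  moreover have "finite \<dots>" by (intro finite_set_of_finite_funs) auto
  ultimately show ?thesis by (rule finite_subset)
qed

definition Dp :: "(nat \<Rightarrow> nat) \<Rightarrow> nat set \<Rightarrow> real" where
  "Dp f A = (\<Prod>i\<in>A. 1 / (real (f i) + 1))"

lemma Dp_nonneg: "Dp f A \<ge> 0" unfolding Dp_def by (intro prod_nonneg) auto

lemma sum_Dp_bound:
  assumes A: "finite A" and S: "finite S" and inj: "inj_on (\<lambda>f. restrict f A) S"
    and le: "\<And>f i. f \<in> S \<Longrightarrow> i \<in> A \<Longrightarrow> f i \<le> n"
  shows "(\<Sum>f\<in>S. Dp f A) \<le> harm (Suc n) ^ card A"
proof -
  define G where "G h = (\<Prod>i\<in>A. 1 / (real (h i) + 1))" for h :: "nat \<Rightarrow> nat"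
  have "(\<Sum>f\<in>S. Dp f A) = (\<Sum>f\<in>S. G (restrict f A))"
    unfolding Dp_def G_def by (intro sum.cong prod.cong) auto
  also have "\<dots> = (\<Sum>h\<in>(\<lambda>f. restrict f A) ` S. G h)"
    using sum.reindex[OF inj, of G] by simp
  also have "\<dots> \<le> (\<Sum>h\<in>PiE A (\<lambda>_. {..n}). G h)"
    using le A by (intro sum_mono2 finite_PiE) (auto simp: G_def intro!: prod_nonneg)
  also have "\<dots> = (\<Prod>i\<in>A. \<Sum>k\<in>{..n}. 1 / (real k + 1))"
    unfolding G_def by (rule prod_sum_PiE[symmetric]) (use A in auto)
  also have "\<dots> = harm (Suc n) ^ card A"
    by (simp add: harm_altdef lessThan_Suc_atMost[symmetric] inverse_eq_divide add.commute)
  finally show ?thesis .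
qed

definition shterm :: "nat \<Rightarrow> (nat \<Rightarrow> complex) \<Rightarrow> (nat \<Rightarrow> nat) \<Rightarrow> complex" where
  "shterm p s f = (\<Prod>i<p - 1. s i ^ (f i - f (Suc i))) * s (p - 1) ^ (f (p - 1) + 1)
      / (\<Prod>i<p. of_nat (f i + 1))"

lemma ssh_altdef: "ssh p s m = (\<Sum>f\<in>sh_indices p m. shterm p s f)"
  unfolding ssh_def shterm_def ..

lemma shterm_norm:
  assumes p: "p \<ge> 1" and s: "\<And>i. i < p \<Longrightarrow> norm (s i) \<le> 1"
  shows "norm (shterm p s f) \<le> Dp f {..<p}"
proof -
  have n1: "norm ((\<Prod>i<p - 1. s i ^ (f i - f (Suc i))) * s (p - 1) ^ (f (p - 1) + 1)) \<le> 1"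
    unfolding norm_mult prod_norm[symmetric] norm_power using p s
    by (intro mult_le_one prod_le_1 power_le_one) (auto intro!: prod_nonneg power_le_one)
  have d: "norm (\<Prod>i<p. (of_nat (f i + 1) :: complex)) = (\<Prod>i<p. real (f i) + 1)"
    unfolding prod_norm[symmetric] by (intro prod.cong refl) (metis norm_of_nat of_nat_1 of_nat_add)
  have pos: "(\<Prod>i<p. real (f i) + 1) > 0" by (intro prod_pos) auto
  have "norm (shterm p s f) = norm ((\<Prod>i<p - 1. s i ^ (f i - f (Suc i))) * s (p - 1) ^ (f (p - 1) + 1)) / (\<Prod>i<p. real (f i) + 1)"
    unfolding shterm_def norm_divide d ..
  also have "\<dots> \<le> 1 / (\<Prod>i<p. real (f i) + 1)"
    using n1 pos by (intro divide_right_mono) auto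
  also have "\<dots> = Dp f {..<p}" unfolding Dp_def by (simp add: prod_dividef)
  finally show ?thesis .
qed

lemma Dp_split0:
  assumes "p \<ge> 1" shows "Dp f {..<p} = 1 / (real (f 0) + 1) * Dp f {1..<p}"
proof -
  have "{..<p} = insert 0 {1..<p}" using assms by auto
  then show ?thesis unfolding Dp_def by simp
qed

lemma Dp_split1:
  assumes "p \<ge> 2" shows "Dp f {1..<p} = 1 / (real (f 1) + 1) * Dp f {2..<p}"
proof -
  have "{1..<p} = insert 1 {2..<p}" using assms by auto
  then show ?thesis unfolding Dp_def by simp
qed

lemma V_bound:
  assumes p: "p \<ge> 1" and s: "\<And>i. i < p \<Longrightarrow> norm (s i) \<le> 1"
  shows "norm ((of_nat n + 1) * ssh p s n) \<le> harm (Suc n) ^ (p - 1)"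
proof -
  have "norm ((of_nat n + 1) * ssh p s n) = (real n + 1) * norm (\<Sum>f\<in>sh_indices p n. shterm p s f)"
    unfolding ssh_altdef norm_mult by (metis norm_of_nat of_nat_Suc add.commute)
  also have "\<dots> \<le> (real n + 1) * (\<Sum>f\<in>sh_indices p n. Dp f {..<p})"
    by (intro mult_left_mono order.trans[OF norm_sum] sum_mono shterm_norm[OF p s]) auto
  also have "\<dots> = (\<Sum>f\<in>sh_indices p n. Dp f {1..<p})"
    unfolding sum_distrib_left
    by (intro sum.cong refl) (auto simp: Dp_split0[OF p] sh_indices_def)
  also have "\<dots> \<le> harm (Suc n) ^ card {1..<p}"
  proof (rule sum_Dp_bound[OF _ finite_sh])
    show "inj_on (\<lambda>f. restrict f {1..<p}) (sh_indices p n)"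
    proof (rule inj_onI, rule ext)
      fix f g i assume f: "f \<in> sh_indices p n" and g: "g \<in> sh_indices p n"
        and e: "restrict f {1..<p} = restrict g {1..<p}"
      show "f i = g i"
      proof (cases "i = 0 \<or> i \<ge> p")
        case True then show ?thesis using f g by (auto simp: sh_indices_def)
      next
        case False then have "i \<in> {1..<p}" by auto
        then show ?thesis using fun_cong[OF e, of i] by simp
      qed
    qed
  qed (auto intro: sh_le)
  finally show ?thesis by simp
qed



definition Aq :: "(nat \<Rightarrow> complex) \<Rightarrow> nat \<Rightarrow> (nat \<Rightarrow> nat) \<Rightarrow> complex" where
  "Aq s q f = (\<Prod>i<q. s (Suc i) ^ (f (Suc i) - f (Suc (Suc i)))) * s (Suc q) ^ (f (Suc q) + 1)"
definition Bq :: "nat \<Rightarrow> (nat \<Rightarrow> nat) \<Rightarrow> complex" where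
  "Bq q f = (\<Prod>i<Suc q. of_nat (f (Suc i) + 1))"

lemma one_plus_nat_nz: "(1::complex) + of_nat x \<noteq> 0" by (metis of_nat_Suc of_nat_neq_0)
lemma Bq_nz: "Bq q f \<noteq> 0" unfolding Bq_def by (simp add: prod_zero_iff one_plus_nat_nz)

lemma shterm_split:
  "shterm (Suc (Suc q)) s f = s 0 ^ (f 0 - f 1) * Aq s q f / ((of_nat (f 0) + 1) * Bq q f)"
  unfolding shterm_def Aq_def Bq_def diff_Suc_1 prod.lessThan_Suc_shift[of _ "Suc q"] prod.lessThan_Suc_shift[of _ q]
  by (simp add: mult_ac)

lemma Aq_upd0: "Aq s q (f(0:=m)) = Aq s q f" unfolding Aq_def by simp
lemma Bq_upd0: "Bq q (f(0:=m)) = Bq q f" unfolding Bq_def by simp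

lemma decomp:
  assumes p: "p = Suc (Suc q)" and n: "n \<ge> 1"
  shows "(of_nat n + 1) * ssh p s n = s 0 * ((of_nat (n - 1) + 1) * ssh p s (n - 1))
         + (\<Sum>f\<in>{f\<in>sh_indices p n. f 1 = n}. (of_nat n + 1) * shterm p s f)"
proof -
  let ?I = "sh_indices p n"
  have "(of_nat n + 1) * ssh p s n = (\<Sum>f\<in>?I. (of_nat n + 1) * shterm p s f)"
    unfolding ssh_altdef sum_distrib_left ..
  also have "\<dots> = (\<Sum>f\<in>?I \<inter> {f. f 1 = n}. (of_nat n + 1) * shterm p s f)
                  + (\<Sum>f\<in>?I - {f. f 1 = n}. (of_nat n + 1) * shterm p s f)"
    by (rule sum.Int_Diff[OF finite_sh])
  also have "(\<Sum>f\<in>?I - {f. f 1 = n}. (of_nat n + 1) * shterm p s f)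
           = (\<Sum>g\<in>sh_indices p (n - 1). s 0 * of_nat n * shterm p s g)"
  proof (rule sum.reindex_bij_witness[where i = "\<lambda>g. g(0:=n)" and j = "\<lambda>f. f(0:=n-1)"])
    fix f assume f: "f \<in> ?I - {f. f 1 = n}"
    then have f0: "f 0 = n" and f1: "f 1 < n" using sh_le[of f p n 1] by (auto simp: sh_indices_def)
    show "(f(0 := n - 1))(0 := n) = f" using f0 by auto
    have fs: "\<And>i. Suc i < p \<Longrightarrow> f (Suc i) \<le> f i" "\<And>i. i \<ge> p \<Longrightarrow> f i = 0"
      using f by (auto simp: sh_indices_def)
    show "f(0 := n - 1) \<in> sh_indices p (n - 1)"
      unfolding sh_indices_def
    proof (intro CollectI conjI allI impI)
      fix i assume "Suc i < p" then show "(f(0 := n - 1)) (Suc i) \<le> (f(0 := n - 1)) i"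
        using fs(1)[of i] f1 by (cases i) auto
    next
      fix i assume "p \<le> i" then show "(f(0 := n - 1)) i = 0" using fs(2)[of i] p by auto
    qed simp
    show "s 0 * of_nat n * shterm p s (f(0 := n - 1)) = (of_nat n + 1) * shterm p s f"
    proof -
      obtain k where k: "n - f 1 = Suc k" "n - 1 - f 1 = k" using f1 by (metis Suc_diff_Suc diff_Suc_1 diff_commute)
      have nn: "(of_nat (n - 1) + 1 :: complex) = of_nat n" using n by (simp add: of_nat_diff)
      have nz: "(of_nat n + 1 :: complex) \<noteq> 0" using one_plus_nat_nz[of n] by (simp add: add.commute)
      show ?thesis
        unfolding p shterm_split Aq_upd0 Bq_upd0 fun_upd_same fun_upd_other[OF zero_neq_one[symmetric]] f0 k nn
      proof -
        have nz2: "(of_nat n :: complex) \<noteq> 0" using n by simp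
        have "s 0 * of_nat n * (s 0 ^ k * Aq s q f / (of_nat n * Bq q f)) = s 0 ^ Suc k * Aq s q f / Bq q f"
          using nz2 by (simp add: field_simps)
        moreover have "(of_nat n + 1) * (s 0 ^ Suc k * Aq s q f / ((of_nat n + 1) * Bq q f)) = s 0 ^ Suc k * Aq s q f / Bq q f"
          by (subst times_divide_eq_right, rule mult_divide_mult_cancel_left[OF nz])
        ultimately show "s 0 * of_nat n * (s 0 ^ k * Aq s q f / (of_nat n * Bq q f)) =
          (of_nat n + 1) * (s 0 ^ Suc k * Aq s q f / ((of_nat n + 1) * Bq q f))" by simp
      qed
    qed
  next
    fix g assume g: "g \<in> sh_indices p (n - 1)"
    then have g0: "g 0 = n - 1" and g1: "g 1 \<le> n - 1" using sh_le[of g p "n-1" 1] by (auto simp: sh_indices_def)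
    show "(g(0 := n))(0 := n - 1) = g" using g0 by auto
    show "g(0 := n) \<in> ?I - {f. f 1 = n}"
      using g g1 n p unfolding sh_indices_def by auto
  qed
  also have "\<dots> = s 0 * ((of_nat (n - 1) + 1) * ssh p s (n - 1))"
    unfolding ssh_altdef sum_distrib_left using n by (simp add: of_nat_diff mult_ac)
  finally show ?thesis by (simp add: Int_def add.commute)
qed



lemma harm_ge1: "harm (Suc n) \<ge> (1::real)"
  using harm_mono[of 1 "Suc n"] by (simp add: harm_def)

lemma W_bound_p2:
  assumes p: "p = Suc (Suc q)" and s: "\<And>i. i < p \<Longrightarrow> norm (s i) \<le> 1"
  shows "norm (\<Sum>f\<in>{f\<in>sh_indices p n. f 1 = n}. (of_nat n + 1) * shterm p s f)
           \<le> harm (Suc n) ^ (p - 2) / (real n + 1)"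
proof -
  let ?S = "{f\<in>sh_indices p n. f 1 = n}"
  have p1: "p \<ge> 1" and p2: "p \<ge> 2" using p by auto
  have fin: "finite ?S" using finite_sh by auto
  have "norm (\<Sum>f\<in>?S. (of_nat n + 1) * shterm p s f) \<le> (\<Sum>f\<in>?S. (real n + 1) * Dp f {..<p})"
  proof (intro order.trans[OF norm_sum] sum_mono)
    fix f assume "f \<in> ?S"
    have "norm ((of_nat n + 1 :: complex)) = real n + 1"
      by (metis norm_of_nat of_nat_1 of_nat_add)
    then show "norm ((of_nat n + 1) * shterm p s f) \<le> (real n + 1) * Dp f {..<p}"
    proof -
      have "norm (shterm p s f) \<le> Dp f {..<p}" by (rule shterm_norm[OF p1]) (rule s)
      then show ?thesis unfolding norm_mult using \<open>norm ((of_nat n + 1 :: complex)) = real n + 1\<close>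
        by (simp add: mult_left_mono)
    qed
  qed
  also have "\<dots> = (\<Sum>f\<in>?S. Dp f {2..<p} / (real n + 1))"
  proof (intro sum.cong refl)
    fix f assume f: "f \<in> ?S"
    then have "f 0 = n" "f 1 = n" by (auto simp: sh_indices_def)
    then show "(real n + 1) * Dp f {..<p} = Dp f {2..<p} / (real n + 1)"
    proof -
      have nz: "real n + 1 \<noteq> 0" by simp
      have aux: "\<And>x D::real. x \<noteq> 0 \<Longrightarrow> x * (1/x * (1/x*D)) = D/x" by (simp add: field_simps)
      show ?thesis unfolding Dp_split0[OF p1] Dp_split1[OF p2] \<open>f 0 = n\<close> \<open>f 1 = n\<close>
        using nz aux by blast
    qed
  qed
  also have "\<dots> = (\<Sum>f\<in>?S. Dp f {2..<p}) / (real n + 1)" by (simp add: sum_divide_distrib)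
  also have "\<dots> \<le> harm (Suc n) ^ card {2..<p} / (real n + 1)"
  proof (intro divide_right_mono sum_Dp_bound[OF _ fin])
    show "inj_on (\<lambda>f. restrict f {2..<p}) ?S"
    proof (rule inj_onI, rule ext)
      fix f g i assume f: "f \<in> ?S" and g: "g \<in> ?S"
        and e: "restrict f {2..<p} = restrict g {2..<p}"
      show "f i = g i"
      proof (cases "i = 0 \<or> i = 1 \<or> i \<ge> p")
        case True then show ?thesis using f g by (auto simp: sh_indices_def)
      next
        case False then have "i \<in> {2..<p}" by auto
        then show ?thesis using fun_cong[OF e, of i] by simp
      qed
    qed
  qed (auto intro: sh_le)
  finally show ?thesis by simp
qed

lemma sh_indices_1: "sh_indices 1 n = {\<lambda>i. if i = 0 then n else 0}"
  unfolding sh_indices_def by (auto simp: fun_eq_iff)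

lemma ssh_1: "(of_nat n + 1) * ssh 1 s n = s 0 ^ Suc n"
proof -
  have nz: "(of_nat n + 1 :: complex) \<noteq> 0" using one_plus_nat_nz[of n] by (simp add: add.commute)
  show ?thesis unfolding ssh_def sh_indices_1 using nz by (simp add: add.commute)
qed



lemma harm_le_ln: "harm (Suc n) \<le> 1 + ln (real n + 1)"
proof -
  have "harm (Suc n) - ln (real (Suc n)) \<le> harm (Suc 0) - ln (real (Suc 0))"
    using decseq_harm_diff_ln unfolding decseq_def by blast
  then show ?thesis by (simp add: harm_def add.commute)
qed

lemma ln_le_powr: fixes x e :: real assumes "x \<ge> 1" "e > 0" shows "ln x \<le> x powr e / e"
proof -
  have "e * ln x = ln (x powr e)" using assms by (simp add: powr_def)
  also have "\<dots> \<le> x powr e - 1" using assms by (intro ln_le_minus_one) auto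
  finally show ?thesis using assms by (simp add: field_simps)
qed

lemma harm_pow_bound:
  assumes p: "p \<ge> 1" and d: "d > 0"
  shows "\<exists>C>0. \<forall>n. harm (Suc n) ^ p \<le> C * (real n + 1) powr d"
proof -
  define e where "e = d / real p"
  have e: "e > 0" using p d by (simp add: e_def)
  define C where "C = (1 + 1 / e) ^ p"
  have "harm (Suc n) ^ p \<le> C * (real n + 1) powr d" for n
  proof -
    let ?x = "real n + 1"
    have x1: "?x powr e \<ge> 1" using e by (intro ge_one_powr_ge_zero) auto
    have "harm (Suc n) \<le> 1 + ?x powr e / e" using harm_le_ln[of n] ln_le_powr[of ?x e] e by simp
    also have "\<dots> \<le> (1 + 1 / e) * ?x powr e" using x1 e by (simp add: field_simps)
    finally have h: "harm (Suc n) \<le> (1 + 1 / e) * ?x powr e" .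
    have "harm (Suc n) ^ p \<le> ((1 + 1 / e) * ?x powr e) ^ p"
      using h harm_ge1[of n] by (intro power_mono) auto
    also have "\<dots> = C * (?x powr e) ^ p" unfolding C_def by (simp add: power_mult_distrib)
    also have "(?x powr e) ^ p = ?x powr d" using p by (subst powr_power) (auto simp: e_def)
    finally show ?thesis .
  qed
  moreover have "C > 0" using e unfolding C_def by (intro zero_less_power) (simp add: add_pos_pos)
  ultimately show ?thesis by blast
qed

lemma summable_harm_powr:
  assumes p: "p \<ge> 1" and a: "a > 1"
  shows "summable (\<lambda>n. harm (Suc n) ^ p * (real n + 1) powr (-a))"
proof -
  obtain C where C: "C > 0" "\<And>n. harm (Suc n) ^ p \<le> C * (real n + 1) powr ((a - 1) / 2)"
    using harm_pow_bound[OF p, of "(a-1)/2"] a by auto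
  have s: "summable (\<lambda>n. (real n + 1) powr (- (a + 1) / 2))"
  proof -
    have "summable (\<lambda>n. real (Suc n) powr (- (a + 1) / 2))"
      using a by (subst summable_Suc_iff) (simp add: summable_real_powr_iff)
    then show ?thesis by (simp add: add.commute)
  qed
  show ?thesis
  proof (rule summable_comparison_test'[OF summable_mult[OF s, of C]])
    fix n :: nat
    have "norm (harm (Suc n) ^ p * (real n + 1) powr (-a)) = harm (Suc n) ^ p * (real n + 1) powr (-a)"
      using harm_ge1[of n] by simp
    also have "\<dots> \<le> C * (real n + 1) powr ((a - 1) / 2) * (real n + 1) powr (-a)"
      by (intro mult_right_mono C) auto
    also have "\<dots> = C * (real n + 1) powr (- (a + 1) / 2)"
      by (simp add: mult.assoc powr_add[symmetric] field_simps)
    finally show "norm (harm (Suc n) ^ p * (real n + 1) powr (-a)) \<le> C * (real n + 1) powr (- (a + 1) / 2)" .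
  qed
qed

lemma tendsto_harm_powr:
  assumes p: "p \<ge> 1" and b: "b > 0"
  shows "(\<lambda>n. harm (Suc n) ^ p * (real n + 1) powr (-b)) \<longlonglongrightarrow> 0"
proof -
  obtain C where C: "C > 0" "\<And>n. harm (Suc n) ^ p \<le> C * (real n + 1) powr (b / 2)"
    using harm_pow_bound[OF p, of "b/2"] b by auto
  have lim: "(\<lambda>n. (real n + 1) powr (- b / 2)) \<longlonglongrightarrow> 0"
  proof (rule tendsto_neg_powr)
    show "filterlim (\<lambda>n. real n + 1) at_top sequentially"
      using filterlim_tendsto_add_at_top[OF tendsto_const filterlim_real_sequentially, of 1]
      by (simp add: add.commute)
  qed (use b in auto)
  show ?thesis
  proof (rule Lim_null_comparison[OF _ tendsto_mult_right_zero[OF lim, of C]])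
    show "\<forall>\<^sub>F n in sequentially. norm (harm (Suc n) ^ p * (real n + 1) powr (-b)) \<le> C * (real n + 1) powr (- b / 2)"
    proof (intro always_eventually allI)
      fix n :: nat
      have "norm (harm (Suc n) ^ p * (real n + 1) powr (-b)) = harm (Suc n) ^ p * (real n + 1) powr (-b)"
        using harm_ge1[of n] by simp
      also have "\<dots> \<le> C * (real n + 1) powr (b / 2) * (real n + 1) powr (-b)"
        by (intro mult_right_mono C) auto
      also have "\<dots> = C * (real n + 1) powr (- b / 2)"
        by (simp add: mult.assoc powr_add[symmetric] field_simps)
      finally show "norm (harm (Suc n) ^ p * (real n + 1) powr (-b)) \<le> C * (real n + 1) powr (- b / 2)" .
    qed
  qed
qed



lemma bound_all:
  fixes x :: "nat \<Rightarrow> 'a::real_normed_vector" and g :: "nat \<Rightarrow> real"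
  assumes ev: "\<And>n. n \<ge> N \<Longrightarrow> norm (x n) \<le> C * g n" and g: "\<And>n. g n > 0"
  shows "\<exists>C'. \<forall>n. norm (x n) \<le> C' * g n"
proof -
  define M where "M = Max (insert 0 ((\<lambda>n. norm (x n) / g n) ` {..<N}))"
  have "norm (x n) \<le> max C M * g n" for n
  proof (cases "n < N")
    case True
    then have "norm (x n) / g n \<le> M" unfolding M_def by (intro Max_ge) auto
    then have "norm (x n) \<le> M * g n" using g[of n] by (simp add: field_simps)
    also have "\<dots> \<le> max C M * g n" using g[of n] by (intro mult_right_mono) auto
    finally show ?thesis .
  next
    case False
    then have "norm (x n) \<le> C * g n" using ev by simp
    also have "\<dots> \<le> max C M * g n" using g[of n] by (intro mult_right_mono) auto
    finally show ?thesis .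
  qed
  then show ?thesis by blast
qed

lemma powr_shift_le:
  assumes n: "real n \<ge> 1"
  shows "real n powr e \<le> 2 powr \<bar>e\<bar> * (real n + 1) powr e"
proof (cases "e \<ge> 0")
  case True
  have "real n powr e \<le> (real n + 1) powr e" using True by (intro powr_mono2) auto
  also have "\<dots> \<le> 2 powr \<bar>e\<bar> * (real n + 1) powr e"
  proof -
    have "1 \<le> (2::real) powr \<bar>e\<bar>" by (intro ge_one_powr_ge_zero) auto
    then show ?thesis by (intro mult_le_cancel_right1[THEN iffD2]) (auto simp: not_less)
  qed
  finally show ?thesis .
next
  case False
  have "(real n + 1) powr e \<ge> (2 * real n) powr e" using False n by (intro powr_mono2') auto
  also have "(2 * real n) powr e = 2 powr e * real n powr e" by (rule powr_mult)
  finally have "real n powr e \<le> (real n + 1) powr e / 2 powr e" by (simp add: field_simps)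
  also have "\<dots> = 2 powr \<bar>e\<bar> * (real n + 1) powr e" using False by (simp add: powr_minus field_simps)
  finally show ?thesis .
qed

lemma poch_bound:
  fixes z :: complex
  shows "\<exists>C. \<forall>n. norm (pochhammer (-z) n / fact n) \<le> C * (real n + 1) powr (- Re z - 1)"
proof -
  define w where "w = -z"
  obtain K where K: "K > 0" "\<And>n. norm (rGamma_series w n) \<le> K"
    using convergent_imp_Bseq[OF convergentI[OF rGamma_series_LIMSEQ[of w]]] by (auto elim!: BseqE)
  define N where "N = nat \<lceil>2 * norm w\<rceil> + 1"
  define e where "e = - Re z - 1"
  have ev: "norm (pochhammer w n / fact n) \<le> (2 * K * 2 powr \<bar>e\<bar>) * (real n + 1) powr e" if n: "n \<ge> N" for n
  proof -
    have n1: "real n \<ge> 1" and n2: "real n \<ge> 2 * norm w" using n unfolding N_def by linarith+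
    have wn: "norm (w + of_nat n) \<ge> real n / 2"
    proof -
      have "real n = norm (of_nat n :: complex)" by simp
      also have "\<dots> \<le> norm (w + of_nat n) + norm w" using norm_triangle_ineq4[of "w + of_nat n" w] by simp
      finally show ?thesis using n2 by linarith
    qed
    have wn0: "w + of_nat n \<noteq> 0" using wn n1 by auto
    define E where "E = exp (w * of_real (ln (of_nat n)))"
    have E0: "E \<noteq> 0" by (simp add: E_def)
    have nE: "norm E = real n powr (- Re z)"
      using n1 by (simp add: E_def powr_def w_def)
    have "pochhammer w n / fact n = rGamma_series w n * E / (w + of_nat n)"
    proof -
      have f0: "(fact n :: complex) \<noteq> 0" by simp
      have "rGamma_series w n = pochhammer w n * (w + of_nat n) / (fact n * E)"
        unfolding rGamma_series_def E_def[symmetric] by (simp add: pochhammer_Suc)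
      then have "rGamma_series w n * E / (w + of_nat n) = pochhammer w n * ((w + of_nat n) * E) / (fact n * E * (w + of_nat n))"
        by (simp add: mult_ac)
      also have "\<dots> = pochhammer w n * ((w + of_nat n) * E) / (fact n * ((w + of_nat n) * E))"
        by (simp only: mult_ac)
      also have "\<dots> = pochhammer w n / fact n" using E0 wn0 by (intro mult_divide_mult_cancel_right) simp
      finally show ?thesis by simp
    qed
    then have "norm (pochhammer w n / fact n) = norm (rGamma_series w n) * real n powr (- Re z) / norm (w + of_nat n)"
      by (simp add: norm_mult norm_divide nE)
    also have "\<dots> \<le> K * real n powr (- Re z) / (real n / 2)"
      using K wn n1 by (intro frac_le mult_right_mono) auto
    also have "\<dots> = 2 * K * real n powr e"
    proof -
      have "real n powr (- Re z) = real n * real n powr e" using n1 by (simp add: e_def powr_diff powr_minus field_simps)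
      then show ?thesis using n1 by (simp add: field_simps)
    qed
    also have "\<dots> \<le> 2 * K * (2 powr \<bar>e\<bar> * (real n + 1) powr e)"
      using K n1 by (intro mult_left_mono powr_shift_le) auto
    finally show ?thesis by (simp add: mult_ac)
  qed
  have "\<exists>C'. \<forall>n. norm (pochhammer w n / fact n) \<le> C' * (real n + 1) powr e"
    by (rule bound_all[OF ev]) auto
  then show ?thesis unfolding w_def e_def .
qed



lemma norm_nat1: "norm (of_nat n + 1 :: complex) = real n + 1"
  by (metis norm_of_nat of_nat_1 of_nat_add)

lemma powr_div_self: "(x::real) > 0 \<Longrightarrow> x powr e / x = x powr (e - 1)"
  by (simp add: powr_diff)

lemma powr_step: "(x::real) > 0 \<Longrightarrow> L * (C * x powr e) / x = C * (L * x powr (e - 1))"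
  using powr_div_self[of x e] by (simp add: mult_ac times_divide_eq_right[symmetric] del: times_divide_eq_right)

lemma powr_cdiv2: "(x::real) > 0 \<Longrightarrow> e' = e - 1 \<Longrightarrow> C * x powr e / x = C * x powr e'"
  unfolding times_divide_eq_right[symmetric] by (simp add: powr_div_self)

lemma ediff_aux:
  fixes a b c x z :: complex
  assumes a: "a \<noteq> 0" and b: "b \<noteq> 0" and bx: "b = x + 2"
  shows "c * (x - z) / a / b - c / a = - c * (z + 2) / (a * b)"
proof -
  have "c * (x - z) / a / b - c / a = (c * (x - z) - c * b) / (a * b)" using a b by (simp add: field_simps)
  also have "c * (x - z) - c * b = - c * (z + 2)" unfolding bx by (simp add: algebra_simps)
  finally show ?thesis .
qed

theorem proposition3p14:
  fixes p :: nat and s :: "nat \<Rightarrow> complex"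
  assumes "p \<ge> 1"
    and "\<And>i. i < p \<Longrightarrow> s i \<noteq> 0"
    and "\<And>i. i < p \<Longrightarrow> norm (s i) \<le> 1"
  shows "(\<forall>z::complex. Re z > -1 \<longrightarrow>
            summable (\<lambda>n. norm ((-1) ^ n * ssh p s n * (z gchoose n))))
       \<and> (s 0 \<noteq> 1 \<longrightarrow> (\<forall>z::complex. Re z > -2 \<longrightarrow>
            summable (\<lambda>n. (-1) ^ n * ssh p s n * (z gchoose n))))"
proof -
  have p1: "p \<ge> 1" by (rule assms(1))
  note sb = assms(3)
  define V where "V n = (of_nat n + 1) * ssh p s n" for n
  define L :: "nat \<Rightarrow> real" where "L n = harm (Suc n) ^ p" for n
  have L1: "L n \<ge> 1" for n unfolding L_def using harm_ge1[of n] by (simp add: one_le_power)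
  have Vb: "norm (V n) \<le> L n" for n
  proof -
    have "norm (V n) \<le> harm (Suc n) ^ (p - 1)" unfolding V_def by (rule V_bound[OF p1 sb])
    also have "\<dots> \<le> L n" unfolding L_def using harm_ge1[of n] by (intro power_increasing) auto
    finally show ?thesis .
  qed
  have nz1: "(of_nat n + 1 :: complex) \<noteq> 0" for n using one_plus_nat_nz[of n] by (simp add: add.commute)
  have main: "(-1) ^ n * ssh p s n * (z gchoose n) = V n * (pochhammer (-z) n / fact n / (of_nat n + 1))"
    for z :: complex and n
  proof -
    have h1: "(-1::complex) ^ n * (-1) ^ n = 1" by (simp add: power_mult_distrib[symmetric])
    have "(-1) ^ n * ssh p s n * (z gchoose n) = ((-1) ^ n * (-1) ^ n) * ssh p s n * (pochhammer (-z) n / fact n)"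
      by (simp add: gbinomial_pochhammer mult_ac)
    also have "\<dots> = ssh p s n * (pochhammer (-z) n / fact n)" unfolding h1 by simp
    also have "\<dots> = (of_nat n + 1) * ssh p s n * (pochhammer (-z) n / fact n / (of_nat n + 1))"
      using nz1[of n] by simp
    finally show ?thesis unfolding V_def .
  qed
  have part1: "summable (\<lambda>n. norm ((-1) ^ n * ssh p s n * (z gchoose n)))" if z: "Re z > -1" for z :: complex
  proof -
    obtain C where C: "\<And>n. norm (pochhammer (-z) n / fact n) \<le> C * (real n + 1) powr (- Re z - 1)"
      using poch_bound[of z] by blast
    have sm: "summable (\<lambda>n. C * (L n * (real n + 1) powr (- (Re z + 2))))"
      unfolding L_def using z by (intro summable_mult summable_harm_powr p1) auto
    show ?thesis
    proof (rule summable_comparison_test'[OF sm])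
      fix n :: nat
      have "norm (norm ((-1) ^ n * ssh p s n * (z gchoose n))) = norm (V n) * norm (pochhammer (-z) n / fact n) / (real n + 1)"
        unfolding main by (simp add: norm_mult norm_divide norm_nat1)
      also have "\<dots> \<le> L n * (C * (real n + 1) powr (- Re z - 1)) / (real n + 1)"
        using L1[of n] by (intro divide_right_mono mult_mono Vb C) auto
      also have "\<dots> = C * (L n * (real n + 1) powr (- (Re z + 2)))"
        by (subst powr_step) (auto simp: algebra_simps)
      finally show "norm (norm ((-1) ^ n * ssh p s n * (z gchoose n))) \<le> C * (L n * (real n + 1) powr (- (Re z + 2)))" .
    qed
  qed
  have part2: "summable (\<lambda>n. (-1) ^ n * ssh p s n * (z gchoose n))" if z: "Re z > -2" and s1: "s 0 \<noteq> 1" for z :: complex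
  proof -
    define c where "c n = pochhammer (-z) n / fact n" for n
    define e where "e n = c n / (of_nat n + 1)" for n
    define \<sigma> where "\<sigma> = Re z"
    obtain C where C: "\<And>n. norm (c n) \<le> C * (real n + 1) powr (- \<sigma> - 1)"
      using poch_bound[of z] unfolding c_def \<sigma>_def by blast
    have C0: "C \<ge> 0" using C[of 0] by (simp add: c_def)
    have eb: "norm (e n) \<le> C * (real n + 1) powr (- \<sigma> - 2)" for n
    proof -
      have "norm (e n) = norm (c n) / (real n + 1)" unfolding e_def by (simp add: norm_divide norm_nat1)
      also have "\<dots> \<le> C * (real n + 1) powr (- \<sigma> - 1) / (real n + 1)" by (intro divide_right_mono C) auto
      also have "\<dots> = C * (real n + 1) powr (- \<sigma> - 2)"
        by (rule powr_cdiv2) auto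
      finally show ?thesis .
    qed
    have ediff: "e (Suc n) - e n = - c n * (z + 2) / ((of_nat n + 1) * (of_nat n + 2))" for n
    proof -
      have cs: "c (Suc n) = c n * (of_nat n - z) / (of_nat n + 1)"
        unfolding c_def by (simp add: pochhammer_Suc field_simps)
      have n2: "(of_nat n + 2 :: complex) \<noteq> 0" using nz1[of "Suc n"] by (simp add: add.assoc add.commute)
      have "e (Suc n) - e n = c n * (of_nat n - z) / (of_nat n + 1) / (of_nat n + 2) - c n / (of_nat n + 1)"
        unfolding e_def cs by (simp add: add.assoc)
      also have "\<dots> = - c n * (z + 2) / ((of_nat n + 1) * (of_nat n + 2))"
        by (rule ediff_aux[OF nz1 n2]) simp
      finally show ?thesis .
    qed
    have edb: "norm (e (Suc n) - e n) \<le> (C * norm (z + 2)) * (real n + 1) powr (- (\<sigma> + 3))" for n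
    proof -
      have "norm (e (Suc n) - e n) = norm (c n) * norm (z + 2) / ((real n + 1) * (real n + 2))"
        unfolding ediff by (simp add: norm_mult norm_divide norm_nat1 norm_minus_commute)
          (metis norm_of_nat of_nat_add of_nat_numeral)
      also have "\<dots> \<le> C * (real n + 1) powr (- \<sigma> - 1) * norm (z + 2) / ((real n + 1) * (real n + 1))"
        using C0 by (intro frac_le mult_right_mono C mult_mono) auto
      also have "\<dots> = (C * norm (z + 2)) * ((real n + 1) powr (- \<sigma> - 1) / (real n + 1) / (real n + 1))"
        by (simp add: field_simps)
      also have "(real n + 1) powr (- \<sigma> - 1) / (real n + 1) / (real n + 1) = (real n + 1) powr (- (\<sigma> + 3))"
        using powr_cdiv2[of "real n + 1" "- \<sigma> - 2" "- \<sigma> - 1" 1] powr_cdiv2[of "real n + 1" "- (\<sigma> + 3)" "- \<sigma> - 2" 1]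
        by simp
      finally show ?thesis .
    qed
    define W where "W n = (if n = 0 then V 0 else V n - s 0 * V (n - 1))" for n
    have Wb: "norm (W n) \<le> L n / (real n + 1)" for n
    proof (cases "n = 0")
      case True then show ?thesis using Vb[of 0] by (simp add: W_def)
    next
      case False
      then have n1: "n \<ge> 1" by simp
      show ?thesis
      proof (cases "p = 1")
        case True
        have "V n = s 0 ^ Suc n" "V (n - 1) = s 0 ^ n" unfolding V_def True ssh_1 using n1 by auto
        then have "W n = 0" using False by (simp add: W_def)
        then show ?thesis using L1[of n] by simp
      next
        case False
        have "p - 2 + 2 = p" using p1 False by simp
        then obtain q where q: "p = Suc (Suc q)" by (metis add_2_eq_Suc')
        have "W n = (\<Sum>f\<in>{f\<in>sh_indices p n. f 1 = n}. (of_nat n + 1) * shterm p s f)"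
          unfolding W_def V_def using decomp[OF q n1, of s] \<open>n \<noteq> 0\<close> by simp
        then have "norm (W n) \<le> harm (Suc n) ^ (p - 2) / (real n + 1)"
          using W_bound_p2[OF q sb] by simp
        also have "\<dots> \<le> L n / (real n + 1)"
          unfolding L_def using harm_ge1[of n] by (intro divide_right_mono power_increasing) auto
        finally show ?thesis .
      qed
    qed
    have s3: "\<sigma> + 3 > 1" and s2: "\<sigma> + 2 > 0" using z by (auto simp: \<sigma>_def)
    have sumW: "summable (\<lambda>n. W n * e n)"
    proof (rule summable_comparison_test'[OF summable_mult[OF summable_harm_powr[OF p1 s3], of C]])
      fix n :: nat
      have "norm (W n * e n) \<le> L n / (real n + 1) * (C * (real n + 1) powr (- \<sigma> - 2))"
        unfolding norm_mult using L1[of n] by (intro mult_mono Wb eb) auto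
      also have "\<dots> = C * (L n * ((real n + 1) powr (- \<sigma> - 2) / (real n + 1)))"
        by (simp add: mult_ac)
      also have "(real n + 1) powr (- \<sigma> - 2) / (real n + 1) = (real n + 1) powr (- (\<sigma> + 3))"
        using powr_cdiv2[of "real n + 1" "- (\<sigma> + 3)" "- \<sigma> - 2" 1] by simp
      finally show "norm (W n * e n) \<le> C * (harm (Suc n) ^ p * (real n + 1) powr (- (\<sigma> + 3)))"
        by (simp add: L_def)
    qed
    define a where "a n = V n * (e (Suc n) - e n)" for n
    define b where "b n = V n * e n" for n
    have suma: "summable a"
    proof (rule summable_comparison_test'[OF summable_mult[OF summable_harm_powr[OF p1 s3], of "C * norm (z + 2)"]])
      fix n :: nat
      have "norm (a n) \<le> L n * ((C * norm (z + 2)) * (real n + 1) powr (- (\<sigma> + 3)))"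
        unfolding a_def norm_mult using L1[of n] by (intro mult_mono Vb edb) auto
      then show "norm (a n) \<le> C * norm (z + 2) * (harm (Suc n) ^ p * (real n + 1) powr (- (\<sigma> + 3)))"
        by (simp add: L_def mult_ac)
    qed
    have limb: "b \<longlonglongrightarrow> 0"
    proof (rule Lim_null_comparison[OF _ tendsto_mult_right_zero[OF tendsto_harm_powr[OF p1 s2], of C]])
      show "\<forall>\<^sub>F n in sequentially. norm (b n) \<le> C * (harm (Suc n) ^ p * (real n + 1) powr (- (\<sigma> + 2)))"
      proof (intro always_eventually allI)
        fix n :: nat
        have "norm (b n) \<le> L n * (C * (real n + 1) powr (- \<sigma> - 2))"
          unfolding b_def norm_mult using L1[of n] by (intro mult_mono Vb eb) auto
        then show "norm (b n) \<le> C * (harm (Suc n) ^ p * (real n + 1) powr (- (\<sigma> + 2)))"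
          by (simp add: L_def mult_ac)
      qed
    qed
    define D where "D n = ((if n = 0 then 0 else V (n - 1)) - V n) * e n" for n
    have sumD: "summable D"
    proof -
      have "summable (\<lambda>n. a n + (b n - b (Suc n)))"
        by (intro summable_add suma telescope_summable'[OF limb])
      moreover have "(\<lambda>n. a n + (b n - b (Suc n))) = (\<lambda>n. D (Suc n))"
        by (auto simp: D_def a_def b_def algebra_simps)
      ultimately show ?thesis by (simp add: summable_Suc_iff)
    qed
    have ident: "(1 - s 0) * (V n * e n) = W n * e n + s 0 * D n" for n
      by (cases "n = 0") (auto simp: W_def D_def algebra_simps)
    have "summable (\<lambda>n. (1 - s 0) * (V n * e n))"
      unfolding ident by (intro summable_add sumW summable_mult sumD)
    then have "summable (\<lambda>n. inverse (1 - s 0) * ((1 - s 0) * (V n * e n)))"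
      by (rule summable_mult)
    moreover have "inverse (1 - s 0) * ((1 - s 0) * (V n * e n)) = (-1) ^ n * ssh p s n * (z gchoose n)" for n
      using s1 unfolding main e_def c_def by simp
    ultimately show ?thesis by simp
  qed
  show ?thesis using part1 part2 by blast
qed

end
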